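(* Let $X$ be a $d$-dimensional clique complex, $3d_1\le d-2$, $X$ $d_1$-well-connected, and $\nu:\widetilde{F^{d_1}X}\to F^{d_1}X$ an $\ell$-covering map. For a face $r\in X$ let $Z_r=\nu^{-1}(F^{d_1}X_r)\subseteq\widetilde{F^{d_1}X}$ (the induced subcomplex on the preimage of the vertices of $F^{d_1}(X_r)$). Then: (1) for every nonempty $r\in X$ of dimension $\le d_1$, $Z_r$ has exactly $\ell$ connected components $Z_r^1,\dots,Z_r^\ell$, and $\nu$ restricted to each $Z_r^i$ is an isomorphism onto $F^{d_1}X_r$; (2) for all nonempty $r\subseteq s$ of dimension $\le d_1$ there is a permutation $\pi_{r,s}$ of $[\ell]$ such that $Z_s^i\subseteq Z_r^j$ if and only if $\pi_{r,s}(i)=j$.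
   Context: $X(i)$ = faces with $i+1$ vertices; link $X_r=\{t\setminus r:r\subseteq t\in X\}$. Clique complex: every set of pairwise adjacent vertices is a face. Faces complex $F^{d_1}X$: vertex set $X(d_1)$, faces the sets of pairwise disjoint $d_1$-faces whose union is in $X$; $F^{d_1}X_r:=F^{d_1}(X_r)$, viewed as a subcomplex of $F^{d_1}X$ (a vertex $s$ of it corresponds to $s\in X(d_1)$ with $s\cap r=\emptyset$, $s\cup r\in X$). Covering map: a surjective simplicial homomorphism on vertices that restricts to an isomorphism between the link of each vertex and the link of its image; $\ell$-cover if each vertex has $\ell$ preimages. Simply connected: connected, and every $\ell$-cover is a disjoint union of $\ell$ components each mapped isomorphically. $d_1$-well-connected: for every face $r$ of dimension $\le d_1$ (including $\emptyset$) $F^{d_1}(X_r)$ is connected, and for every vertex $r$ it is simply connected. *)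

theory Defs
  imports Main
begin

definition simplicial_complex :: "'v set set \<Rightarrow> bool" where
  "simplicial_complex X \<longleftrightarrow> (\<forall>t\<in>X. finite t) \<and> (\<forall>t\<in>X. \<forall>u. u \<subseteq> t \<longrightarrow> u \<in> X)"

definition vertices :: "'v set set \<Rightarrow> 'v set" where
  "vertices X = \<Union>X"

definition has_dim :: "'v set set \<Rightarrow> nat \<Rightarrow> bool" where
  "has_dim X d \<longleftrightarrow> (\<forall>t\<in>X. card t \<le> d + 1) \<and> (\<exists>t\<in>X. card t = d + 1)"

definition clique_complex :: "'v set set \<Rightarrow> bool" where
  "clique_complex X \<longleftrightarrow> simplicial_complex X \<and>
     (\<forall>t. finite t \<longrightarrow> (\<forall>v\<in>t. {v} \<in> X) \<longrightarrow> (\<forall>u\<in>t. \<forall>v\<in>t. u \<noteq> v \<longrightarrow> {u, v} \<in> X) \<longrightarrow> t \<in> X)"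

definition link :: "'v set set \<Rightarrow> 'v set \<Rightarrow> 'v set set" where
  "link X r = {t - r | t. r \<subseteq> t \<and> t \<in> X}"

definition faces_complex :: "nat \<Rightarrow> 'v set set \<Rightarrow> 'v set set set" where
  "faces_complex d1 X = {S. finite S \<and> (\<forall>s\<in>S. s \<in> X \<and> card s = d1 + 1) \<and>
      (\<forall>s\<in>S. \<forall>s'\<in>S. s \<noteq> s' \<longrightarrow> s \<inter> s' = {}) \<and> \<Union>S \<in> X}"

definition induced :: "'v set set \<Rightarrow> 'v set \<Rightarrow> 'v set set" where
  "induced K S = {t \<in> K. t \<subseteq> S}"

definition cx_iso :: "('b \<Rightarrow> 'v) \<Rightarrow> 'b set set \<Rightarrow> 'v set set \<Rightarrow> bool" where
  "cx_iso f A B \<longleftrightarrow> inj_on f (vertices A) \<and> bij_betw (\<lambda>t. f ` t) A B"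

definition covering_map :: "'b set set \<Rightarrow> 'v set set \<Rightarrow> ('b \<Rightarrow> 'v) \<Rightarrow> bool" where
  "covering_map Y K f \<longleftrightarrow> simplicial_complex Y \<and> simplicial_complex K \<and>
     (\<forall>t\<in>Y. f ` t \<in> K) \<and> f ` vertices Y = vertices K \<and>
     (\<forall>y\<in>vertices Y. cx_iso f (link Y {y}) (link K {f y}))"

definition l_cover :: "'b set set \<Rightarrow> 'v set set \<Rightarrow> ('b \<Rightarrow> 'v) \<Rightarrow> nat \<Rightarrow> bool" where
  "l_cover Y K f l \<longleftrightarrow> covering_map Y K f \<and>
     (\<forall>v\<in>vertices K. finite {y \<in> vertices Y. f y = v} \<and> card {y \<in> vertices Y. f y = v} = l)"

definition adj :: "'v set set \<Rightarrow> 'v \<Rightarrow> 'v \<Rightarrow> bool" where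
  "adj K u v \<longleftrightarrow> u \<noteq> v \<and> {u, v} \<in> K"

definition cx_connected :: "'v set set \<Rightarrow> bool" where
  "cx_connected K \<longleftrightarrow> vertices K \<noteq> {} \<and> (\<forall>u\<in>vertices K. \<forall>v\<in>vertices K. (adj K)\<^sup>*\<^sup>* u v)"

definition components :: "'v set set \<Rightarrow> 'v set set" where
  "components K = {{w \<in> vertices K. (adj K)\<^sup>*\<^sup>* v w} | v. v \<in> vertices K}"

text \<open>Covering complexes are taken with vertex type 'v \<times> nat,
which is no loss of generality (every l-cover is isomorphic to one of this type).\<close>
definition simply_connected :: "'v set set \<Rightarrow> bool" where
  "simply_connected K \<longleftrightarrow> cx_connected K \<and>
     (\<forall>(Y :: ('v \<times> nat) set set) f l. l_cover Y K f l \<longrightarrow>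
        finite (components Y) \<and> card (components Y) = l \<and>
        (\<forall>C\<in>components Y. cx_iso f (induced Y C) K))"

definition well_connected :: "nat \<Rightarrow> 'v set set \<Rightarrow> bool" where
  "well_connected d1 X \<longleftrightarrow>
     (\<forall>r\<in>X. card r \<le> d1 + 1 \<longrightarrow> cx_connected (faces_complex d1 (link X r))) \<and>
     (\<forall>v. {v} \<in> X \<longrightarrow> simply_connected (faces_complex d1 (link X {v})))"

end

theory Submission
  imports Defs
begin

lemma vertices_induced_sub: "vertices (induced K S) \<subseteq> vertices K \<inter> S"
  unfolding vertices_def induced_def by auto

lemma sc_sub: "simplicial_complex K \<Longrightarrow> t \<in> K \<Longrightarrow> u \<subseteq> t \<Longrightarrow> u \<in> K"
  unfolding simplicial_complex_def by blast

lemma sc_fin: "simplicial_complex K \<Longrightarrow> t \<in> K \<Longrightarrow> finite t"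
  unfolding simplicial_complex_def by blast

lemma singleton_in: assumes "simplicial_complex K" "v \<in> vertices K" shows "{v} \<in> K"
proof -
  obtain t where "t \<in> K" "v \<in> t" using assms(2) unfolding vertices_def by blast
  then show ?thesis using sc_sub[OF assms(1)] by blast
qed

lemma vertices_induced: assumes a: "simplicial_complex K" "S \<subseteq> vertices K" shows "vertices (induced K S) = S"
proof (rule equalityI)
  show "vertices (induced K S) \<subseteq> S" by (rule subset_trans[OF vertices_induced_sub Int_lower2])
  show "S \<subseteq> vertices (induced K S)"
  proof
    fix s assume "s \<in> S"
    then have "s \<in> vertices K" using a(2) by (rule subsetD[rotated])
    then have "{s} \<in> K" by (rule singleton_in[OF a(1)])
    then have "{s} \<in> induced K S" using \<open>s \<in> S\<close> unfolding induced_def by simp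
    then show "s \<in> vertices (induced K S)" unfolding vertices_def by blast
  qed
qed

lemma simplicial_induced: assumes "simplicial_complex K" shows "simplicial_complex (induced K S)"
  unfolding simplicial_complex_def induced_def using sc_sub[OF assms] sc_fin[OF assms] by auto

lemma adj_sym: "adj K a b \<Longrightarrow> adj K b a"
  unfolding adj_def by (auto simp: insert_commute)

lemma adj_vert: "adj K a b \<Longrightarrow> a \<in> vertices K \<and> b \<in> vertices K"
  unfolding adj_def vertices_def by blast

lemma rtc_sym: "(adj K)\<^sup>*\<^sup>* a b \<Longrightarrow> (adj K)\<^sup>*\<^sup>* b a"
proof (induction rule: rtranclp_induct)
  case base then show ?case by simp
next
  case (step y z)
  show ?case by (rule converse_rtranclp_into_rtranclp[OF adj_sym[OF step.hyps(2)] step.IH])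
qed

lemma rt_transfer:
  assumes "R\<^sup>*\<^sup>* a b" "a \<in> A" "\<And>x y. x \<in> A \<Longrightarrow> R x y \<Longrightarrow> y \<in> A \<and> S (g x) (g y)"
  shows "b \<in> A \<and> S\<^sup>*\<^sup>* (g a) (g b)"
  using assms(1)
proof (induction rule: rtranclp_induct)
  case base then show ?case using assms(2) by simp
next
  case (step y z)
  have "z \<in> A \<and> S (g y) (g z)" using assms(3) step by blast
  then show ?case using step.IH by (meson rtranclp.rtrancl_into_rtrancl)
qed

lemma rtc_vert: assumes "(adj K)\<^sup>*\<^sup>* a b" "a \<in> vertices K" shows "b \<in> vertices K"
proof -
  have "\<And>x y. x \<in> vertices K \<Longrightarrow> adj K x y \<Longrightarrow> y \<in> vertices K \<and> adj K x y" by (simp add: adj_vert)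
  from rt_transfer[of "adj K" a b "vertices K" "adj K" "\<lambda>x. x", OF assms this] show ?thesis by blast
qed

lemma comp_eq:
  assumes "(adj K)\<^sup>*\<^sup>* a b"
  shows "{w \<in> vertices K. (adj K)\<^sup>*\<^sup>* a w} = {w \<in> vertices K. (adj K)\<^sup>*\<^sup>* b w}"
proof -
  have "(adj K)\<^sup>*\<^sup>* b a" using rtc_sym[OF assms] .
  have "(adj K)\<^sup>*\<^sup>* a w \<longleftrightarrow> (adj K)\<^sup>*\<^sup>* b w" for w
    using rtranclp_trans[OF \<open>(adj K)\<^sup>*\<^sup>* b a\<close>, of w] rtranclp_trans[OF assms, of w] by blast
  then show ?thesis by simp
qed

lemma components_sub: "C \<in> components K \<Longrightarrow> C \<subseteq> vertices K"
  unfolding components_def by blast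

lemma components_ne: "C \<in> components K \<Longrightarrow> C \<noteq> {}"
  unfolding components_def by blast

lemma components_cover: "v \<in> vertices K \<Longrightarrow> \<exists>C\<in>components K. v \<in> C"
  unfolding components_def by blast

lemma components_disj:
  assumes "C \<in> components K" "C' \<in> components K" "x \<in> C" "x \<in> C'"
  shows "C = C'"
proof -
  obtain v where v: "C = {w \<in> vertices K. (adj K)\<^sup>*\<^sup>* v w}" using assms(1) unfolding components_def by blast
  obtain v' where v': "C' = {w \<in> vertices K. (adj K)\<^sup>*\<^sup>* v' w}" using assms(2) unfolding components_def by blast
  have 1: "(adj K)\<^sup>*\<^sup>* v x" using assms(3) v by blast
  have 2: "(adj K)\<^sup>*\<^sup>* v' x" using assms(4) v' by blast
  have "(adj K)\<^sup>*\<^sup>* v v'" by (rule rtranclp_trans[OF 1 rtc_sym[OF 2]])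
  then show ?thesis using v v' comp_eq by metis
qed

lemma components_adj:
  assumes "C \<in> components K" "a \<in> C" "adj K a b" shows "b \<in> C"
proof -
  obtain v where v: "C = {w \<in> vertices K. (adj K)\<^sup>*\<^sup>* v w}" using assms(1) unfolding components_def by blast
  have "(adj K)\<^sup>*\<^sup>* v a" using assms(2) v by blast
  then have "(adj K)\<^sup>*\<^sup>* v b" using assms(3) by (rule rtranclp.rtrancl_into_rtrancl)
  then show ?thesis using v adj_vert[OF assms(3)] by blast
qed

lemma components_conn:
  assumes "C \<in> components K" "a \<in> C" "b \<in> C" shows "(adj K)\<^sup>*\<^sup>* a b"
proof -
  obtain v where v: "C = {w \<in> vertices K. (adj K)\<^sup>*\<^sup>* v w}" using assms(1) unfolding components_def by blast
  have 1: "(adj K)\<^sup>*\<^sup>* v a" using assms(2) v by blast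
  have 2: "(adj K)\<^sup>*\<^sup>* v b" using assms(3) v by blast
  show ?thesis by (rule rtranclp_trans[OF rtc_sym[OF 1] 2])
qed

lemma partition_components:
  assumes ne: "\<And>A. A \<in> P \<Longrightarrow> A \<noteq> {} \<and> A \<subseteq> vertices K"
    and cov: "\<And>v. v \<in> vertices K \<Longrightarrow> \<exists>A\<in>P. v \<in> A"
    and disj: "\<And>A B x. A \<in> P \<Longrightarrow> B \<in> P \<Longrightarrow> x \<in> A \<Longrightarrow> x \<in> B \<Longrightarrow> A = B"
    and conn: "\<And>A a b. A \<in> P \<Longrightarrow> a \<in> A \<Longrightarrow> b \<in> A \<Longrightarrow> (adj K)\<^sup>*\<^sup>* a b"
    and cl: "\<And>A a b. A \<in> P \<Longrightarrow> a \<in> A \<Longrightarrow> adj K a b \<Longrightarrow> b \<in> A"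
  shows "components K = P"
proof -
  have key: "{w \<in> vertices K. (adj K)\<^sup>*\<^sup>* v w} = A" if "A \<in> P" "v \<in> A" for A v
  proof
    show "A \<subseteq> {w \<in> vertices K. (adj K)\<^sup>*\<^sup>* v w}" using that conn ne by blast
    show "{w \<in> vertices K. (adj K)\<^sup>*\<^sup>* v w} \<subseteq> A"
    proof
      fix w assume "w \<in> {w \<in> vertices K. (adj K)\<^sup>*\<^sup>* v w}"
      then have "(adj K)\<^sup>*\<^sup>* v w" by blast
      then show "w \<in> A" using rt_transfer[of "adj K" v w A "adj K" "\<lambda>x. x"] that cl by blast
    qed
  qed
  show ?thesis
  proof
    show "components K \<subseteq> P"
    proof
      fix C assume "C \<in> components K"
      then obtain v where v: "v \<in> vertices K" "C = {w \<in> vertices K. (adj K)\<^sup>*\<^sup>* v w}" unfolding components_def by blast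
      then obtain A where "A \<in> P" "v \<in> A" using cov by blast
      then show "C \<in> P" using key v by simp
    qed
    show "P \<subseteq> components K"
    proof
      fix A assume A: "A \<in> P"
      then obtain v where "v \<in> A" using ne by blast
      then show "A \<in> components K" using key[OF A] ne[OF A] unfolding components_def by blast
    qed
  qed
qed

lemma bij_betw_restrict:
  assumes "bij_betw h A B" "\<And>a. a \<in> A \<Longrightarrow> R a \<longleftrightarrow> S (h a)"
  shows "bij_betw h {a\<in>A. R a} {b\<in>B. S b}"
  using assms unfolding bij_betw_def inj_on_def by auto

lemma iso_conn:
  assumes iso: "cx_iso f A B" and con: "cx_connected B"
    and a: "a \<in> vertices A" and b: "b \<in> vertices A"
  shows "(adj A)\<^sup>*\<^sup>* a b"
proof -
  have inj: "inj_on f (vertices A)" and bij: "bij_betw (\<lambda>t. f ` t) A B" using iso unfolding cx_iso_def by auto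
  have fv: "f ` vertices A = vertices B"
    using bij unfolding bij_betw_def vertices_def by auto
  define g where "g = inv_into (vertices A) f"
  have step: "adj A (g x) (g y)" if "x \<in> vertices B" "adj B x y" for x y
  proof -
    have "{x, y} \<in> B" "x \<noteq> y" using that unfolding adj_def by auto
    have "{x, y} \<in> (\<lambda>t. f ` t) ` A" using bij \<open>{x, y} \<in> B\<close> by (simp add: bij_betw_def)
    then obtain t where t: "t \<in> A" "f ` t = {x, y}" by auto
    have tv: "t \<subseteq> vertices A" unfolding vertices_def using t(1) by (rule Union_upper)
    have "x \<in> f ` t" "y \<in> f ` t" using t(2) by auto
    then obtain p q where p: "p \<in> t" "f p = x" and q: "q \<in> t" "f q = y" by (metis imageE)
    have "t = {p, q}"
    proof
      show "{p, q} \<subseteq> t" using p q by simp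
      show "t \<subseteq> {p, q}"
      proof
        fix z assume "z \<in> t"
        then have "f z = f p \<or> f z = f q" using t p q by auto
        moreover have "z \<in> vertices A" "p \<in> vertices A" "q \<in> vertices A" using tv \<open>z \<in> t\<close> p q by auto
        ultimately show "z \<in> {p, q}" using inj by (auto dest: inj_onD)
      qed
    qed
    moreover have "g x = p" "g y = q" unfolding g_def using p q tv inj by (auto intro: inv_into_f_eq)
    ultimately show ?thesis using t \<open>x \<noteq> y\<close> p q unfolding adj_def by auto
  qed
  have fa: "f a \<in> vertices B" "f b \<in> vertices B" using a b fv by (metis imageI)+
  have c: "(adj B)\<^sup>*\<^sup>* (f a) (f b)" using con fa unfolding cx_connected_def by simp
  have h: "\<And>x y. x \<in> vertices B \<Longrightarrow> adj B x y \<Longrightarrow> y \<in> vertices B \<and> adj A (g x) (g y)"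
    using step adj_vert by meson
  have "(adj A)\<^sup>*\<^sup>* (g (f a)) (g (f b))" using rt_transfer[where S="adj A" and g=g, OF c fa(1) h] by simp
  moreover have "g (f a) = a" "g (f b) = b" unfolding g_def using inj a b by auto
  ultimately show ?thesis by simp
qed

lemma link_induced: assumes "y \<in> S" shows "link (induced Y S) {y} = {u \<in> link Y {y}. u \<subseteq> S}"
proof (rule set_eqI, rule iffI)
  fix u assume "u \<in> link (induced Y S) {y}"
  then obtain t where "u = t - {y}" "{y} \<subseteq> t" "t \<in> Y" "t \<subseteq> S" unfolding link_def induced_def by auto
  then show "u \<in> {u \<in> link Y {y}. u \<subseteq> S}" unfolding link_def by auto
next
  fix u assume "u \<in> {u \<in> link Y {y}. u \<subseteq> S}"
  then obtain t where t: "u = t - {y}" "{y} \<subseteq> t" "t \<in> Y" and "u \<subseteq> S" unfolding link_def by auto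
  then have "t \<subseteq> S" using assms by auto
  then show "u \<in> link (induced Y S) {y}" using t unfolding link_def induced_def by auto
qed

lemma link_sub_vert: "u \<in> link Y {y} \<Longrightarrow> u \<subseteq> vertices Y"
  unfolding link_def vertices_def by auto

lemma vertices_filter: "vertices {u \<in> A. R u} \<subseteq> vertices A"
  unfolding vertices_def by auto

lemma cov_restrict:
  assumes lc: "l_cover Y K f l" and Q: "Q \<subseteq> vertices K"
  defines "P \<equiv> {y \<in> vertices Y. f y \<in> Q}"
  shows "l_cover (induced Y P) (induced K Q) f l"
proof -
  have scY: "simplicial_complex Y" and scK: "simplicial_complex K"
    and fa: "\<forall>t\<in>Y. f ` t \<in> K" and sj: "f ` vertices Y = vertices K"
    and lk: "\<forall>y\<in>vertices Y. cx_iso f (link Y {y}) (link K {f y})"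
    and fib: "\<forall>v\<in>vertices K. finite {y \<in> vertices Y. f y = v} \<and> card {y \<in> vertices Y. f y = v} = l"
    using lc unfolding l_cover_def covering_map_def by auto
  have PY: "P \<subseteq> vertices Y" unfolding P_def by auto
  have vP: "vertices (induced Y P) = P" by (rule vertices_induced[OF scY PY])
  have vQ: "vertices (induced K Q) = Q" by (rule vertices_induced[OF scK Q])
  have "f ` P = Q"
  proof (rule equalityI)
    show "f ` P \<subseteq> Q" unfolding P_def by auto
    show "Q \<subseteq> f ` P"
    proof
      fix q assume "q \<in> Q"
      then have "q \<in> f ` vertices Y" using Q sj by auto
      then obtain y where "y \<in> vertices Y" "q = f y" by auto
      then show "q \<in> f ` P" using \<open>q \<in> Q\<close> unfolding P_def by auto
    qed
  qed
  have faces: "\<forall>t\<in>induced Y P. f ` t \<in> induced K Q"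
    using fa unfolding induced_def P_def by auto
  have links: "cx_iso f (link (induced Y P) {y}) (link (induced K Q) {f y})" if y: "y \<in> P" for y
  proof -
    have yv: "y \<in> vertices Y" "f y \<in> Q" using y unfolding P_def by auto
    have e1: "link (induced Y P) {y} = {u \<in> link Y {y}. u \<subseteq> P}" by (rule link_induced[OF y])
    have e2: "link (induced K Q) {f y} = {u \<in> link K {f y}. u \<subseteq> Q}" by (rule link_induced[OF yv(2)])
    have iso: "cx_iso f (link Y {y}) (link K {f y})" using lk yv by auto
    then have inj: "inj_on f (vertices (link Y {y}))" and bij: "bij_betw ((`) f) (link Y {y}) (link K {f y})"
      unfolding cx_iso_def by auto
    have "inj_on f (vertices {u \<in> link Y {y}. u \<subseteq> P})" by (rule inj_on_subset[OF inj vertices_filter])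
    moreover have "bij_betw ((`) f) {u \<in> link Y {y}. u \<subseteq> P} {u \<in> link K {f y}. u \<subseteq> Q}"
    proof (rule bij_betw_restrict[OF bij])
      fix u assume "u \<in> link Y {y}"
      then have "u \<subseteq> vertices Y" by (rule link_sub_vert)
      then show "u \<subseteq> P \<longleftrightarrow> f ` u \<subseteq> Q" unfolding P_def by auto
    qed
    ultimately show ?thesis unfolding e1 e2 cx_iso_def by simp
  qed
  have fibs: "finite {y \<in> vertices (induced Y P). f y = v} \<and> card {y \<in> vertices (induced Y P). f y = v} = l"
    if v: "v \<in> vertices (induced K Q)" for v
  proof -
    have "v \<in> Q" using v vQ by simp
    then have "{y \<in> vertices (induced Y P). f y = v} = {y \<in> vertices Y. f y = v}" unfolding vP by (auto simp: P_def)
    moreover have "v \<in> vertices K" using \<open>v \<in> Q\<close> Q by auto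
    ultimately show ?thesis using fib by simp
  qed
  show ?thesis unfolding l_cover_def covering_map_def
    using simplicial_induced[OF scY] simplicial_induced[OF scK] faces \<open>f ` P = Q\<close> vP vQ links fibs by auto
qed

lemma adj_mono: "K' \<subseteq> K \<Longrightarrow> adj K' a b \<Longrightarrow> adj K a b"
  unfolding adj_def by auto

lemma rtc_mono: assumes "K' \<subseteq> K" "(adj K')\<^sup>*\<^sup>* a b" shows "(adj K)\<^sup>*\<^sup>* a b"
  using assms(2) by (rule mono_rtranclp[rule_format, rotated]) (use adj_mono[OF assms(1)] in blast)

lemma restrict_comps:
  fixes Y :: "'b set set" and K :: "'v set set" and f :: "'b \<Rightarrow> 'v"
  assumes scY: "simplicial_complex Y" and scK: "simplicial_complex K"
    and QQ: "Q' \<subseteq> Q" "Q \<subseteq> vertices K"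
  defines "P \<equiv> {y \<in> vertices Y. f y \<in> Q}" and "P' \<equiv> {y \<in> vertices Y. f y \<in> Q'}"
  assumes fin: "finite (components (induced Y P))"
    and card: "card (components (induced Y P)) = l"
    and iso: "\<forall>C\<in>components (induced Y P). cx_iso f (induced (induced Y P) C) (induced K Q)"
    and con: "cx_connected (induced K Q')"
  shows "components (induced Y P') = (\<lambda>C. C \<inter> P') ` components (induced Y P)
     \<and> inj_on (\<lambda>C. C \<inter> P') (components (induced Y P))
     \<and> finite (components (induced Y P')) \<and> card (components (induced Y P')) = l
     \<and> (\<forall>D\<in>components (induced Y P'). cx_iso f (induced (induced Y P') D) (induced K Q'))"
proof -
  define ZP where "ZP = induced Y P"
  define ZP' where "ZP' = induced Y P'"
  define \<C> where "\<C> = components ZP"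
  have PY: "P \<subseteq> vertices Y" unfolding P_def by auto
  have PY': "P' \<subseteq> vertices Y" unfolding P'_def by auto
  have PP: "P' \<subseteq> P" unfolding P_def P'_def using QQ by auto
  have scZ: "simplicial_complex ZP" unfolding ZP_def by (rule simplicial_induced[OF scY])
  have scZ': "simplicial_complex ZP'" unfolding ZP'_def by (rule simplicial_induced[OF scY])
  have vZ: "vertices ZP = P" unfolding ZP_def by (rule vertices_induced[OF scY PY])
  have vZ': "vertices ZP' = P'" unfolding ZP'_def by (rule vertices_induced[OF scY PY'])
  have ZZ: "ZP' \<subseteq> ZP" unfolding ZP_def ZP'_def induced_def using PP by auto
  have CP: "C \<subseteq> P" if "C \<in> \<C>" for C using components_sub[OF that[unfolded \<C>_def]] vZ by simp
  have isoC': "cx_iso f (induced ZP' (C \<inter> P')) (induced K Q')" if C: "C \<in> \<C>" for C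
  proof -
    have "cx_iso f (induced ZP C) (induced K Q)" using iso C unfolding \<C>_def ZP_def by auto
    then have inj: "inj_on f (vertices (induced ZP C))" and bij: "bij_betw ((`) f) (induced ZP C) (induced K Q)"
      unfolding cx_iso_def by auto
    have vC: "vertices (induced ZP C) = C" using vertices_induced[OF scZ] CP[OF C] vZ by simp
    have e1: "induced ZP' (C \<inter> P') = {t \<in> induced ZP C. f ` t \<subseteq> Q'}"
      using CP[OF C] unfolding ZP_def ZP'_def induced_def P_def P'_def by auto
    have e2: "induced K Q' = {U \<in> induced K Q. U \<subseteq> Q'}" using QQ unfolding induced_def by auto
    have "vertices (induced ZP' (C \<inter> P')) \<subseteq> C" using vertices_induced_sub[of ZP' "C \<inter> P'"] by auto
    then have "inj_on f (vertices (induced ZP' (C \<inter> P')))" using inj vC by (simp add: inj_on_subset)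
    moreover have "bij_betw ((`) f) {t \<in> induced ZP C. f ` t \<subseteq> Q'} {U \<in> induced K Q. U \<subseteq> Q'}"
      by (rule bij_betw_restrict[OF bij]) simp
    ultimately show ?thesis unfolding cx_iso_def e1 e2 by simp
  qed
  have neC: "C \<inter> P' \<noteq> {}" if C: "C \<in> \<C>" for C
  proof -
    have "vertices (induced K Q') \<noteq> {}" using con unfolding cx_connected_def by simp
    then obtain q where "q \<in> vertices (induced K Q')" by auto
    then have q: "q \<in> Q'" using vertices_induced_sub[of K Q'] by auto
    then have "q \<in> vertices K" using QQ by auto
    then have "{q} \<in> induced K Q" using singleton_in[OF scK] q QQ unfolding induced_def by auto
    moreover have "bij_betw ((`) f) (induced ZP C) (induced K Q)" using iso C unfolding \<C>_def ZP_def cx_iso_def by auto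
    ultimately have "{q} \<in> (`) f ` induced ZP C" unfolding bij_betw_def by simp
    then obtain t where t: "t \<in> induced ZP C" "f ` t = {q}" by auto
    have "q \<in> f ` t" using t(2) by simp
    then obtain y where "y \<in> t" "f y = q" by auto
    then have "y \<in> C" using t unfolding induced_def by auto
    then have "y \<in> P'" using CP[OF C] q \<open>f y = q\<close> unfolding P_def P'_def by auto
    then show ?thesis using \<open>y \<in> C\<close> by auto
  qed
  have comps: "components ZP' = (\<lambda>C. C \<inter> P') ` \<C>"
  proof (rule partition_components)
    fix A assume "A \<in> (\<lambda>C. C \<inter> P') ` \<C>"
    then obtain C where "C \<in> \<C>" "A = C \<inter> P'" by auto
    then show "A \<noteq> {} \<and> A \<subseteq> vertices ZP'" using neC vZ' by auto
  next
    fix v assume "v \<in> vertices ZP'"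
    then have "v \<in> vertices ZP" using vZ vZ' PP by auto
    then obtain C where "C \<in> \<C>" "v \<in> C" using components_cover[OF \<open>v \<in> vertices ZP\<close>] unfolding \<C>_def by auto
    then show "\<exists>A\<in>(\<lambda>C. C \<inter> P') ` \<C>. v \<in> A" using \<open>v \<in> vertices ZP'\<close> vZ' by auto
  next
    fix A B x assume "A \<in> (\<lambda>C. C \<inter> P') ` \<C>" "B \<in> (\<lambda>C. C \<inter> P') ` \<C>" "x \<in> A" "x \<in> B"
    then obtain C C' where "C \<in> \<C>" "A = C \<inter> P'" "C' \<in> \<C>" "B = C' \<inter> P'" by auto
    then have "x \<in> C" "x \<in> C'" using \<open>x \<in> A\<close> \<open>x \<in> B\<close> by auto
    then have "C = C'" using components_disj[of C ZP C' x] \<open>C \<in> \<C>\<close> \<open>C' \<in> \<C>\<close> unfolding \<C>_def by simp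
    then show "A = B" using \<open>A = C \<inter> P'\<close> \<open>B = C' \<inter> P'\<close> by simp
  next
    fix A a b assume "A \<in> (\<lambda>C. C \<inter> P') ` \<C>" "a \<in> A" "b \<in> A"
    then obtain C where C: "C \<in> \<C>" "A = C \<inter> P'" by auto
    have vA: "vertices (induced ZP' A) = A" using vertices_induced[OF scZ'] C vZ' by auto
    have "(adj (induced ZP' A))\<^sup>*\<^sup>* a b"
      using iso_conn[OF isoC'[OF C(1)] con] vA \<open>a \<in> A\<close> \<open>b \<in> A\<close> C(2) by auto
    moreover have "induced ZP' A \<subseteq> ZP'" unfolding induced_def by auto
    ultimately show "(adj ZP')\<^sup>*\<^sup>* a b" by (rule rtc_mono[rotated])
  next
    fix A a b assume "A \<in> (\<lambda>C. C \<inter> P') ` \<C>" "a \<in> A" "adj ZP' a b"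
    then obtain C where C: "C \<in> \<C>" "A = C \<inter> P'" by auto
    have "adj ZP a b" by (rule adj_mono[OF ZZ \<open>adj ZP' a b\<close>])
    moreover have "a \<in> C" using C \<open>a \<in> A\<close> by simp
    ultimately have "b \<in> C" using components_adj[of C ZP a b] C(1) unfolding \<C>_def by simp
    moreover have "b \<in> P'" using adj_vert[OF \<open>adj ZP' a b\<close>] vZ' by auto
    ultimately show "b \<in> A" using C by auto
  qed
  have inj: "inj_on (\<lambda>C. C \<inter> P') \<C>"
  proof (rule inj_onI)
    fix C C' assume C: "C \<in> \<C>" "C' \<in> \<C>" "C \<inter> P' = C' \<inter> P'"
    have "C \<inter> P' \<noteq> {}" using neC[OF C(1)] .
    then obtain x where "x \<in> C \<inter> P'" by auto
    then have "x \<in> C" "x \<in> C'" using C(3) by auto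
    then show "C = C'" using components_disj[of C ZP C' x] C(1,2) unfolding \<C>_def by simp
  qed
  have "card (components ZP') = l" using comps card_image[OF inj] card unfolding \<C>_def ZP_def by simp
  moreover have "finite (components ZP')" using comps fin unfolding \<C>_def ZP_def by simp
  moreover have "\<forall>D\<in>components ZP'. cx_iso f (induced ZP' D) (induced K Q')" using comps isoC' by auto
  ultimately show ?thesis using comps inj unfolding ZP_def ZP'_def \<C>_def by simp
qed

lemma rl_vertices: "vertices ((`) h ` Y) = h ` vertices Y"
  unfolding vertices_def by auto

lemma rl_sc: assumes sc: "simplicial_complex Y" shows "simplicial_complex ((`) h ` Y)"
  unfolding simplicial_complex_def
proof (intro conjI ballI allI impI)
  fix t' assume "t' \<in> (`) h ` Y"
  then obtain t where "t \<in> Y" "t' = h ` t" by auto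
  then show "finite t'" using sc_fin[OF sc] by auto
next
  fix t' u assume "t' \<in> (`) h ` Y" "u \<subseteq> t'"
  then obtain t where t: "t \<in> Y" "t' = h ` t" by auto
  have "u = h ` {x \<in> t. h x \<in> u}" using t \<open>u \<subseteq> t'\<close> by auto
  moreover have "{x \<in> t. h x \<in> u} \<in> Y" using sc_sub[OF sc t(1)] by auto
  ultimately show "u \<in> (`) h ` Y" by auto
qed

lemma face_sub_vert: "t \<in> Y \<Longrightarrow> t \<subseteq> vertices Y"
  unfolding vertices_def by auto

lemma rl_link:
  assumes inj: "inj_on h (vertices Y)" and y: "y \<in> vertices Y"
  shows "link ((`) h ` Y) {h y} = (`) h ` link Y {y}"
proof (rule set_eqI, rule iffI)
  fix u' assume "u' \<in> link ((`) h ` Y) {h y}"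
  then obtain t where t: "t \<in> Y" "u' = h ` t - {h y}" "h y \<in> h ` t" unfolding link_def by auto
  have tv: "t \<subseteq> vertices Y" using t(1) by (rule face_sub_vert)
  have "y \<in> t" using inj_on_image_mem_iff[OF inj y tv] t(3) by simp
  have "h ` (t - {y}) = h ` t - h ` {y}" by (rule inj_on_image_set_diff[OF inj]) (use tv y in auto)
  then have "u' = h ` (t - {y})" using t(2) by simp
  moreover have "t - {y} \<in> link Y {y}" unfolding link_def using t(1) \<open>y \<in> t\<close> by auto
  ultimately show "u' \<in> (`) h ` link Y {y}" by auto
next
  fix u' assume "u' \<in> (`) h ` link Y {y}"
  then obtain t where t: "t \<in> Y" "y \<in> t" "u' = h ` (t - {y})" unfolding link_def by auto
  have tv: "t \<subseteq> vertices Y" using t(1) by (rule face_sub_vert)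
  have "h ` (t - {y}) = h ` t - h ` {y}" by (rule inj_on_image_set_diff[OF inj]) (use tv y in auto)
  then have "u' = h ` t - {h y}" using t(3) by simp
  moreover have "h ` t \<in> (`) h ` Y" using t(1) by auto
  ultimately show "u' \<in> link ((`) h ` Y) {h y}" unfolding link_def using t(2) by auto
qed

lemma rl_adj:
  assumes inj: "inj_on h (vertices Y)" and a: "a \<in> vertices Y" and b: "b \<in> vertices Y"
  shows "adj ((`) h ` Y) (h a) (h b) \<longleftrightarrow> adj Y a b"
proof -
  have ab: "{a, b} \<subseteq> vertices Y" using a b by auto
  have "h a \<noteq> h b \<longleftrightarrow> a \<noteq> b" using inj a b by (auto dest: inj_onD)
  moreover have "{h a, h b} \<in> (`) h ` Y \<longleftrightarrow> {a, b} \<in> Y"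
  proof
    assume "{h a, h b} \<in> (`) h ` Y"
    then obtain t where t: "t \<in> Y" "{h a, h b} = h ` t" by auto
    have "h ` {a, b} = h ` t" using t(2) by simp
    then have "{a, b} = t" using inj_on_image_eq_iff[OF inj ab face_sub_vert[OF t(1)]] by simp
    then show "{a, b} \<in> Y" using t(1) by simp
  next
    assume "{a, b} \<in> Y"
    then have "h ` {a, b} \<in> (`) h ` Y" by (rule imageI)
    then show "{h a, h b} \<in> (`) h ` Y" by simp
  qed
  ultimately show ?thesis unfolding adj_def by simp
qed

lemma rl_comp:
  assumes inj: "inj_on h (vertices Y)" and v: "v \<in> vertices Y"
  shows "{w \<in> vertices ((`) h ` Y). (adj ((`) h ` Y))\<^sup>*\<^sup>* (h v) w} = h ` {w \<in> vertices Y. (adj Y)\<^sup>*\<^sup>* v w}"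
proof (rule equalityI)
  let ?Y' = "(`) h ` Y"
  let ?g = "inv_into (vertices Y) h"
  show "{w \<in> vertices ?Y'. (adj ?Y')\<^sup>*\<^sup>* (h v) w} \<subseteq> h ` {w \<in> vertices Y. (adj Y)\<^sup>*\<^sup>* v w}"
  proof
    fix w' assume "w' \<in> {w \<in> vertices ?Y'. (adj ?Y')\<^sup>*\<^sup>* (h v) w}"
    then have w': "w' \<in> h ` vertices Y" "(adj ?Y')\<^sup>*\<^sup>* (h v) w'" using rl_vertices[of h Y] by auto
    have st: "\<And>x y. x \<in> h ` vertices Y \<Longrightarrow> adj ?Y' x y \<Longrightarrow> y \<in> h ` vertices Y \<and> adj Y (?g x) (?g y)"
    proof -
      fix x y assume x: "x \<in> h ` vertices Y" and xy: "adj ?Y' x y"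
      have "y \<in> vertices ?Y'" using adj_vert[OF xy] by simp
      then have y: "y \<in> h ` vertices Y" using rl_vertices[of h Y] by simp
      obtain a where a: "a \<in> vertices Y" "x = h a" using x by auto
      obtain b where b: "b \<in> vertices Y" "y = h b" using y by auto
      have "adj Y a b" using rl_adj[OF inj a(1) b(1)] xy a b by simp
      moreover have "?g x = a" "?g y = b" using a b inj by auto
      ultimately show "y \<in> h ` vertices Y \<and> adj Y (?g x) (?g y)" using y by simp
    qed
    have hv: "h v \<in> h ` vertices Y" using v by simp
    have r: "w' \<in> h ` vertices Y \<and> (adj Y)\<^sup>*\<^sup>* (?g (h v)) (?g w')"
      by (rule rt_transfer[where S="adj Y" and g="?g", OF w'(2) hv st])
    obtain w where w: "w \<in> vertices Y" "w' = h w" using w'(1) by auto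
    have "?g (h v) = v" "?g w' = w" using v w inj by auto
    then show "w' \<in> h ` {w \<in> vertices Y. (adj Y)\<^sup>*\<^sup>* v w}" using r w by auto
  qed
  show "h ` {w \<in> vertices Y. (adj Y)\<^sup>*\<^sup>* v w} \<subseteq> {w \<in> vertices ?Y'. (adj ?Y')\<^sup>*\<^sup>* (h v) w}"
  proof
    fix w' assume "w' \<in> h ` {w \<in> vertices Y. (adj Y)\<^sup>*\<^sup>* v w}"
    then obtain w where w: "w \<in> vertices Y" "(adj Y)\<^sup>*\<^sup>* v w" "w' = h w" by auto
    have st: "\<And>x y. x \<in> vertices Y \<Longrightarrow> adj Y x y \<Longrightarrow> y \<in> vertices Y \<and> adj ?Y' (h x) (h y)"
    proof -
      fix x y assume x: "x \<in> vertices Y" and xy: "adj Y x y"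
      have y: "y \<in> vertices Y" using adj_vert[OF xy] by simp
      show "y \<in> vertices Y \<and> adj ?Y' (h x) (h y)" using rl_adj[OF inj x y] xy y by simp
    qed
    have "w \<in> vertices Y \<and> (adj ?Y')\<^sup>*\<^sup>* (h v) (h w)"
      by (rule rt_transfer[where S="adj ?Y'" and g=h, OF w(2) v st])
    then show "w' \<in> {w \<in> vertices ?Y'. (adj ?Y')\<^sup>*\<^sup>* (h v) w}" using w rl_vertices[of h Y] by auto
  qed
qed

lemma rl_components:
  assumes inj: "inj_on h (vertices Y)"
  shows "components ((`) h ` Y) = (`) h ` components Y"
proof -
  have "components ((`) h ` Y) = {{w \<in> vertices ((`) h ` Y). (adj ((`) h ` Y))\<^sup>*\<^sup>* v' w} | v'. v' \<in> h ` vertices Y}"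
    unfolding components_def rl_vertices ..
  also have "\<dots> = {h ` {w \<in> vertices Y. (adj Y)\<^sup>*\<^sup>* v w} | v. v \<in> vertices Y}"
    using rl_comp[OF inj] by auto
  also have "\<dots> = (`) h ` components Y" unfolding components_def by auto
  finally show ?thesis .
qed

lemma rl_induced:
  assumes inj: "inj_on h (vertices Y)" and C: "C \<subseteq> vertices Y"
  shows "induced ((`) h ` Y) (h ` C) = (`) h ` induced Y C"
proof (rule set_eqI, rule iffI)
  fix t' assume "t' \<in> induced ((`) h ` Y) (h ` C)"
  then obtain t where t: "t \<in> Y" "t' = h ` t" "h ` t \<subseteq> h ` C" unfolding induced_def by auto
  have tv: "t \<subseteq> vertices Y" by (rule face_sub_vert[OF t(1)])
  have "t \<subseteq> C"
  proof
    fix x assume "x \<in> t"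
    then have "h x \<in> h ` C" using t(3) by auto
    then show "x \<in> C" using inj_on_image_mem_iff[OF inj _ C] tv \<open>x \<in> t\<close> by auto
  qed
  then show "t' \<in> (`) h ` induced Y C" using t unfolding induced_def by auto
next
  fix t' assume "t' \<in> (`) h ` induced Y C"
  then show "t' \<in> induced ((`) h ` Y) (h ` C)" unfolding induced_def by auto
qed

lemma rl_iso:
  assumes inj: "inj_on h (vertices Y)" and A: "\<Union>A \<subseteq> vertices Y"
    and ff: "\<And>x. x \<in> vertices Y \<Longrightarrow> f' (h x) = f x"
  shows "cx_iso f' ((`) h ` A) B \<longleftrightarrow> cx_iso f A B"
proof -
  have injA: "inj_on h (\<Union>A)" using inj A by (rule inj_on_subset)
  have "vertices ((`) h ` A) = h ` (\<Union>A)" unfolding vertices_def by auto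
  then have "inj_on f' (vertices ((`) h ` A)) \<longleftrightarrow> inj_on (f' \<circ> h) (\<Union>A)"
    using comp_inj_on_iff[OF injA] by simp
  also have "\<dots> \<longleftrightarrow> inj_on f (\<Union>A)" using ff A by (intro inj_on_cong) auto
  finally have i: "inj_on f' (vertices ((`) h ` A)) \<longleftrightarrow> inj_on f (vertices A)" unfolding vertices_def .
  have "inj_on ((`) h) (Pow (\<Union>A))" by (rule inj_on_image_Pow[OF injA])
  then have "inj_on ((`) h) A" by (rule inj_on_subset) auto
  then have bh: "bij_betw ((`) h) A ((`) h ` A)" by (simp add: bij_betw_def)
  have "bij_betw ((`) f') ((`) h ` A) B \<longleftrightarrow> bij_betw ((`) f' \<circ> (`) h) A B" by (rule bij_betw_comp_iff[OF bh])
  also have "\<dots> \<longleftrightarrow> bij_betw ((`) f) A B"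
  proof (rule bij_betw_cong)
    fix t assume "t \<in> A"
    then have "t \<subseteq> vertices Y" using A by auto
    then have "(\<lambda>x. f' (h x)) ` t = f ` t" using ff by (intro image_cong) auto
    then show "((`) f' \<circ> (`) h) t = f ` t" by (simp add: image_image)
  qed
  finally show ?thesis unfolding cx_iso_def using i by simp
qed

lemma sc_transfer:
  fixes K :: "'v set set" and Y :: "'b set set" and f :: "'b \<Rightarrow> 'v"
  assumes sc: "simply_connected K" and lc: "l_cover Y K f l"
  shows "finite (components Y) \<and> card (components Y) = l \<and> (\<forall>C\<in>components Y. cx_iso f (induced Y C) K)"
proof -
  have scY: "simplicial_complex Y" and scK: "simplicial_complex K"
    and fa: "\<forall>t\<in>Y. f ` t \<in> K" and sj: "f ` vertices Y = vertices K"
    and lk: "\<forall>y\<in>vertices Y. cx_iso f (link Y {y}) (link K {f y})"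
    and fib: "\<forall>v\<in>vertices K. finite {y \<in> vertices Y. f y = v} \<and> card {y \<in> vertices Y. f y = v} = l"
    using lc unfolding l_cover_def covering_map_def by auto
  define V where "V = vertices Y"
  define e where "e = (\<lambda>k. SOME g :: 'b \<Rightarrow> nat. inj_on g {y \<in> V. f y = k})"
  have einj: "inj_on (e k) {y \<in> V. f y = k}" if k: "k \<in> vertices K" for k
  proof -
    have "finite {y \<in> V. f y = k}" using fib k unfolding V_def by simp
    then obtain g :: "'b \<Rightarrow> nat" and n where "g ` {y \<in> V. f y = k} = {i. i < n}" "inj_on g {y \<in> V. f y = k}"
      using finite_imp_inj_to_nat_seg by blast
    then have "\<exists>g :: 'b \<Rightarrow> nat. inj_on g {y \<in> V. f y = k}" by blast
    then show ?thesis unfolding e_def by (rule someI_ex)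
  qed
  define h where "h = (\<lambda>y. (f y, e (f y) y))"
  have fh: "fst (h x) = f x" for x unfolding h_def by simp
  have inj: "inj_on h V"
  proof (rule inj_onI)
    fix x y assume xy: "x \<in> V" "y \<in> V" "h x = h y"
    then have fxy: "f x = f y" and exy: "e (f x) x = e (f x) y" unfolding h_def by auto
    have "f x \<in> vertices K" using xy(1) sj unfolding V_def by auto
    then have "inj_on (e (f x)) {z \<in> V. f z = f x}" by (rule einj)
    moreover have "x \<in> {z \<in> V. f z = f x}" "y \<in> {z \<in> V. f z = f x}" using xy fxy by auto
    ultimately show "x = y" using exy by (auto dest: inj_onD)
  qed
  then have injY: "inj_on h (vertices Y)" unfolding V_def .
  define Y' where "Y' = (`) h ` Y"
  have vY': "vertices Y' = h ` V" unfolding Y'_def V_def by (rule rl_vertices)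
  have c1: "simplicial_complex Y'" unfolding Y'_def by (rule rl_sc[OF scY])
  have c2: "\<forall>t'\<in>Y'. fst ` t' \<in> K"
  proof
    fix t' assume "t' \<in> Y'"
    then obtain t where "t \<in> Y" "t' = h ` t" unfolding Y'_def by auto
    moreover have "fst ` h ` t = f ` t" by (simp add: image_image fh)
    ultimately show "fst ` t' \<in> K" using fa by simp
  qed
  have c3: "fst ` vertices Y' = vertices K" using sj unfolding vY' V_def by (simp add: image_image fh)
  have c4: "\<forall>y'\<in>vertices Y'. cx_iso fst (link Y' {y'}) (link K {fst y'})"
  proof
    fix y' assume "y' \<in> vertices Y'"
    then obtain y where y: "y \<in> vertices Y" "y' = h y" unfolding vY' V_def by auto
    have "link Y' {y'} = (`) h ` link Y {y}" unfolding Y'_def y(2) by (rule rl_link[OF injY y(1)])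
    moreover have "\<Union>(link Y {y}) \<subseteq> vertices Y" by (rule Union_least) (rule link_sub_vert)
    moreover have "cx_iso f (link Y {y}) (link K {f y})" using lk y by simp
    ultimately show "cx_iso fst (link Y' {y'}) (link K {fst y'})"
      using rl_iso[OF injY, of "link Y {y}" fst f "link K {f y}"] fh y(2) by simp
  qed
  have c5: "\<forall>v\<in>vertices K. finite {y \<in> vertices Y'. fst y = v} \<and> card {y \<in> vertices Y'. fst y = v} = l"
  proof
    fix v assume v: "v \<in> vertices K"
    have e: "{y \<in> vertices Y'. fst y = v} = h ` {y \<in> V. f y = v}" unfolding vY' by (auto simp: fh)
    have "inj_on h {y \<in> V. f y = v}" using inj by (rule inj_on_subset) auto
    then show "finite {y \<in> vertices Y'. fst y = v} \<and> card {y \<in> vertices Y'. fst y = v} = l"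
      unfolding e using fib v unfolding V_def by (simp add: card_image)
  qed
  have lc': "l_cover Y' K fst l" unfolding l_cover_def covering_map_def using c1 scK c2 c3 c4 c5 by simp
  have "\<forall>(Y :: ('v \<times> nat) set set) f l. l_cover Y K f l \<longrightarrow>
        finite (components Y) \<and> card (components Y) = l \<and> (\<forall>C\<in>components Y. cx_iso f (induced Y C) K)"
    using sc unfolding simply_connected_def by simp
  from this[rule_format, OF lc'] have r: "finite (components Y') \<and> card (components Y') = l \<and> (\<forall>C\<in>components Y'. cx_iso fst (induced Y' C) K)" .
  have comps: "components Y' = (`) h ` components Y" unfolding Y'_def by (rule rl_components[OF injY])
  have "inj_on ((`) h) (Pow (vertices Y))" by (rule inj_on_image_Pow[OF injY])
  moreover have "components Y \<subseteq> Pow (vertices Y)" using components_sub by auto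
  ultimately have injc: "inj_on ((`) h) (components Y)" by (rule inj_on_subset)
  have "finite (components Y)" using r comps injc finite_imageD by metis
  moreover have "card (components Y) = l" using r comps injc card_image by metis
  moreover have "cx_iso f (induced Y C) K" if C: "C \<in> components Y" for C
  proof -
    have Cv: "C \<subseteq> vertices Y" by (rule components_sub[OF C])
    have "h ` C \<in> components Y'" using comps C by simp
    then have "cx_iso fst (induced Y' (h ` C)) K" using r by simp
    moreover have "induced Y' (h ` C) = (`) h ` induced Y C" unfolding Y'_def by (rule rl_induced[OF injY Cv])
    moreover have "\<Union>(induced Y C) \<subseteq> vertices Y" unfolding induced_def vertices_def by auto
    ultimately show ?thesis using rl_iso[OF injY, of "induced Y C" fst f K] fh by simp
  qed
  ultimately show ?thesis by simp
qed

lemma link_mem: "s \<in> link X r \<longleftrightarrow> s \<inter> r = {} \<and> s \<union> r \<in> X"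
proof
  assume "s \<in> link X r"
  then obtain t where "s = t - r" "r \<subseteq> t" "t \<in> X" unfolding link_def by auto
  moreover then have "s \<union> r = t" by auto
  ultimately show "s \<inter> r = {} \<and> s \<union> r \<in> X" by auto
next
  assume a: "s \<inter> r = {} \<and> s \<union> r \<in> X"
  then have "s = (s \<union> r) - r" by auto
  then show "s \<in> link X r" unfolding link_def mem_Collect_eq using a by (intro exI[of _ "s \<union> r"]) auto
qed

lemma FL_vert:
  assumes sc: "simplicial_complex X"
  shows "vertices (faces_complex d1 (link X r)) = {s. s \<in> X \<and> card s = d1 + 1 \<and> s \<inter> r = {} \<and> s \<union> r \<in> X}"
proof (rule equalityI)
  show "vertices (faces_complex d1 (link X r)) \<subseteq> {s. s \<in> X \<and> card s = d1 + 1 \<and> s \<inter> r = {} \<and> s \<union> r \<in> X}"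
  proof
    fix s assume "s \<in> vertices (faces_complex d1 (link X r))"
    then obtain U where "U \<in> faces_complex d1 (link X r)" "s \<in> U" unfolding vertices_def by auto
    then have "s \<in> link X r" "card s = d1 + 1" unfolding faces_complex_def by auto
    then have "s \<inter> r = {}" "s \<union> r \<in> X" using link_mem[of s X r] by auto
    moreover then have "s \<in> X" using sc_sub[OF sc \<open>s \<union> r \<in> X\<close>, of s] by auto
    ultimately show "s \<in> {s. s \<in> X \<and> card s = d1 + 1 \<and> s \<inter> r = {} \<and> s \<union> r \<in> X}" using \<open>card s = d1 + 1\<close> by simp
  qed
  show "{s. s \<in> X \<and> card s = d1 + 1 \<and> s \<inter> r = {} \<and> s \<union> r \<in> X} \<subseteq> vertices (faces_complex d1 (link X r))"
  proof
    fix s assume s: "s \<in> {s. s \<in> X \<and> card s = d1 + 1 \<and> s \<inter> r = {} \<and> s \<union> r \<in> X}"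
    then have "s \<in> link X r" using link_mem[of s X r] by auto
    then have "{s} \<in> faces_complex d1 (link X r)" using s unfolding faces_complex_def by auto
    then show "s \<in> vertices (faces_complex d1 (link X r))" unfolding vertices_def by auto
  qed
qed

lemma FL_induced:
  assumes cl: "clique_complex X" and r: "r \<in> X"
  shows "faces_complex d1 (link X r) = induced (faces_complex d1 X) (vertices (faces_complex d1 (link X r)))"
proof -
  have sc: "simplicial_complex X" using cl unfolding clique_complex_def by simp
  note V = FL_vert[OF sc, of d1 r]
  show ?thesis
  proof (rule equalityI)
    show "faces_complex d1 (link X r) \<subseteq> induced (faces_complex d1 X) (vertices (faces_complex d1 (link X r)))"
    proof
      fix U assume U: "U \<in> faces_complex d1 (link X r)"
      then have "\<Union>U \<in> link X r" unfolding faces_complex_def by simp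
      then have "\<Union>U \<union> r \<in> X" using link_mem[of "\<Union>U" X r] by auto
      then have "\<Union>U \<in> X" using sc_sub[OF sc \<open>\<Union>U \<union> r \<in> X\<close>, of "\<Union>U"] by auto
      moreover have "\<forall>s\<in>U. s \<in> X"
      proof
        fix s assume "s \<in> U"
        then have "s \<in> link X r" using U unfolding faces_complex_def by simp
        then have "s \<union> r \<in> X" using link_mem[of s X r] by auto
        then show "s \<in> X" using sc_sub[OF sc \<open>s \<union> r \<in> X\<close>, of s] by auto
      qed
      ultimately have "U \<in> faces_complex d1 X" using U unfolding faces_complex_def by auto
      moreover have "U \<subseteq> vertices (faces_complex d1 (link X r))" using U unfolding vertices_def by auto
      ultimately show "U \<in> induced (faces_complex d1 X) (vertices (faces_complex d1 (link X r)))"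
        unfolding induced_def by simp
    qed
    show "induced (faces_complex d1 X) (vertices (faces_complex d1 (link X r))) \<subseteq> faces_complex d1 (link X r)"
    proof
      fix U assume U: "U \<in> induced (faces_complex d1 X) (vertices (faces_complex d1 (link X r)))"
      then have U1: "U \<in> faces_complex d1 X" "U \<subseteq> vertices (faces_complex d1 (link X r))"
        unfolding induced_def by auto
      then have UF: "finite U" "\<forall>s\<in>U. s \<in> X \<and> card s = d1 + 1"
        "\<forall>s\<in>U. \<forall>s'\<in>U. s \<noteq> s' \<longrightarrow> s \<inter> s' = {}" "\<Union>U \<in> X"
        unfolding faces_complex_def by auto
      have Us: "\<forall>s\<in>U. s \<inter> r = {} \<and> s \<union> r \<in> X" using U1(2) unfolding V by auto
      have fin: "finite (\<Union>U \<union> r)" using UF(1,2) sc_fin[OF sc] sc_fin[OF sc r] by auto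
      have sing: "\<forall>v\<in>\<Union>U \<union> r. {v} \<in> X"
      proof
        fix v assume "v \<in> \<Union>U \<union> r"
        then show "{v} \<in> X"
        proof
          assume "v \<in> \<Union>U" then show ?thesis using sc_sub[OF sc UF(4)] by auto
        next
          assume "v \<in> r" then show ?thesis using sc_sub[OF sc r] by auto
        qed
      qed
      have pairs: "\<forall>u\<in>\<Union>U \<union> r. \<forall>v\<in>\<Union>U \<union> r. u \<noteq> v \<longrightarrow> {u, v} \<in> X"
      proof (intro ballI impI)
        fix u v assume u: "u \<in> \<Union>U \<union> r" and v: "v \<in> \<Union>U \<union> r"
        show "{u, v} \<in> X"
        proof (cases "u \<in> r")
          case ur: True
          show ?thesis
          proof (cases "v \<in> r")
            case True then show ?thesis using ur sc_sub[OF sc r] by auto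
          next
            case False
            then obtain s where "s \<in> U" "v \<in> s" using v by auto
            then have sr: "s \<union> r \<in> X" using Us by auto
            show ?thesis using sc_sub[OF sc sr, of "{u, v}"] ur \<open>v \<in> s\<close> by auto
          qed
        next
          case uU: False
          then obtain s where s: "s \<in> U" "u \<in> s" using u by auto
          show ?thesis
          proof (cases "v \<in> r")
            case True
            have sr: "s \<union> r \<in> X" using Us s by auto
            show ?thesis using sc_sub[OF sc sr, of "{u, v}"] True s by auto
          next
            case False
            then have "v \<in> \<Union>U" using v by auto
            then have "{u, v} \<subseteq> \<Union>U" using s by auto
            then show ?thesis using sc_sub[OF sc UF(4)] by auto
          qed
        qed
      qed
      have "\<forall>t. finite t \<longrightarrow> (\<forall>v\<in>t. {v} \<in> X) \<longrightarrow> (\<forall>u\<in>t. \<forall>v\<in>t. u \<noteq> v \<longrightarrow> {u, v} \<in> X) \<longrightarrow> t \<in> X"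
        using cl unfolding clique_complex_def by (rule conjunct2)
      from this[rule_format, OF fin sing[rule_format] pairs[rule_format]] have "\<Union>U \<union> r \<in> X" .
      moreover have "\<Union>U \<inter> r = {}" using Us by auto
      ultimately have "\<Union>U \<in> link X r" using link_mem[of "\<Union>U" X r] by auto
      moreover have "\<forall>s\<in>U. s \<in> link X r" using Us by (simp add: link_mem)
      ultimately show "U \<in> faces_complex d1 (link X r)" using UF unfolding faces_complex_def by auto
    qed
  qed
qed

lemma FL_mono:
  assumes sc: "simplicial_complex X" and "r \<subseteq> r'"
  shows "vertices (faces_complex d1 (link X r')) \<subseteq> vertices (faces_complex d1 (link X r))"
proof -
  have "s \<union> r \<in> X" if "s \<union> r' \<in> X" for s
    using sc_sub[OF sc that, of "s \<union> r"] assms(2) by auto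
  then show ?thesis unfolding FL_vert[OF sc] using assms(2) by blast
qed

lemma perm_part:
  fixes Zr Zs :: "'b set set" and l :: nat
  assumes scZs: "simplicial_complex Zs" and sub: "Zs \<subseteq> Zr"
    and comps: "components Zs = (\<lambda>C. C \<inter> Ps) ` components Zr"
    and inj: "inj_on (\<lambda>C. C \<inter> Ps) (components Zr)"
    and Lr: "bij_betw Lr {..<l} (components Zr)" and Ls: "bij_betw Ls {..<l} (components Zs)"
  shows "\<exists>\<pi>. bij_betw \<pi> {..<l} {..<l} \<and> (\<forall>i<l. \<forall>j<l. induced Zs (Ls i) \<subseteq> induced Zr (Lr j) \<longleftrightarrow> \<pi> i = j)"
proof -
  have key: "induced Zs D \<subseteq> induced Zr C \<longleftrightarrow> D = C \<inter> Ps" if D: "D \<in> components Zs" and C: "C \<in> components Zr" for D C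
  proof
    assume a: "induced Zs D \<subseteq> induced Zr C"
    obtain C0 where C0: "C0 \<in> components Zr" "D = C0 \<inter> Ps" using D comps by auto
    obtain y where y: "y \<in> D" using components_ne[OF D] by auto
    have "y \<in> vertices Zs" using components_sub[OF D] y by auto
    then have "{y} \<in> Zs" by (rule singleton_in[OF scZs])
    then have "{y} \<in> induced Zs D" using y unfolding induced_def by simp
    then have "{y} \<in> induced Zr C" using a by auto
    then have "y \<in> C" unfolding induced_def by simp
    moreover have "y \<in> C0" using y C0 by simp
    ultimately have "C0 = C" using components_disj[OF C0(1) C] by simp
    then show "D = C \<inter> Ps" using C0 by simp
  next
    assume "D = C \<inter> Ps"
    then show "induced Zs D \<subseteq> induced Zr C" using sub unfolding induced_def by auto
  qed
  have ex1: "\<exists>!j. j < l \<and> Ls i = Lr j \<inter> Ps" if i: "i < l" for i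
  proof -
    have "Ls i \<in> components Zs" using Ls i by (auto simp: bij_betw_def)
    then obtain C where C: "C \<in> components Zr" "Ls i = C \<inter> Ps" using comps by auto
    have "C \<in> Lr ` {..<l}" using Lr C(1) by (simp add: bij_betw_def)
    then obtain j where j: "j < l" "C = Lr j" by auto
    show ?thesis
    proof (rule ex1I[of _ j])
      show "j < l \<and> Ls i = Lr j \<inter> Ps" using j C by simp
    next
      fix j' assume j': "j' < l \<and> Ls i = Lr j' \<inter> Ps"
      have "Lr j' \<in> components Zr" "Lr j \<in> components Zr" using Lr j j' by (auto simp: bij_betw_def)
      moreover have "Lr j' \<inter> Ps = Lr j \<inter> Ps" using j' j C by simp
      ultimately have "Lr j' = Lr j" using inj by (auto dest: inj_onD)
      then show "j' = j" using Lr j j' by (auto simp: bij_betw_def dest: inj_onD)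
    qed
  qed
  define \<pi> where "\<pi> i = (THE j. j < l \<and> Ls i = Lr j \<inter> Ps)" for i
  have \<pi>l: "\<pi> i < l \<and> Ls i = Lr (\<pi> i) \<inter> Ps" if "i < l" for i
    using theI'[OF ex1[OF that]] unfolding \<pi>_def by simp
  have \<pi>eq: "\<pi> i = j \<longleftrightarrow> Ls i = Lr j \<inter> Ps" if ij: "i < l" "j < l" for i j
  proof
    assume "\<pi> i = j" then show "Ls i = Lr j \<inter> Ps" using \<pi>l[OF ij(1)] by simp
  next
    assume "Ls i = Lr j \<inter> Ps"
    then show "\<pi> i = j" unfolding \<pi>_def using the1_equality[OF ex1[OF ij(1)]] ij(2) by simp
  qed
  have injp: "inj_on \<pi> {..<l}"
  proof (rule inj_onI)
    fix i i' assume "i \<in> {..<l}" "i' \<in> {..<l}" "\<pi> i = \<pi> i'"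
    then have "Ls i = Ls i'" using \<pi>l by (metis lessThan_iff)
    then show "i = i'" using Ls \<open>i \<in> {..<l}\<close> \<open>i' \<in> {..<l}\<close> by (auto simp: bij_betw_def dest: inj_onD)
  qed
  have sub: "\<pi> ` {..<l} \<subseteq> {..<l}" using \<pi>l by auto
  have "\<pi> ` {..<l} = {..<l}" by (rule endo_inj_surj[OF finite_lessThan[of l] sub injp])
  then have "bij_betw \<pi> {..<l} {..<l}" using injp by (simp add: bij_betw_def)
  moreover have "\<forall>i<l. \<forall>j<l. induced Zs (Ls i) \<subseteq> induced Zr (Lr j) \<longleftrightarrow> \<pi> i = j"
  proof (intro allI impI)
    fix i j assume ij: "i < l" "j < l"
    have "Ls i \<in> components Zs" "Lr j \<in> components Zr" using Ls Lr ij by (auto simp: bij_betw_def)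
    then show "induced Zs (Ls i) \<subseteq> induced Zr (Lr j) \<longleftrightarrow> \<pi> i = j" using key \<pi>eq[OF ij] by simp
  qed
  ultimately show ?thesis by (intro exI[of _ \<pi>]) simp
qed

theorem claim5p1:
  fixes X :: "'a set set" and d d1 l :: nat
    and Y :: "'b set set" and \<nu> :: "'b \<Rightarrow> 'a set"
  assumes "clique_complex X" and "has_dim X d" and "3 * d1 + 2 \<le> d"
    and "well_connected d1 X"
    and "l_cover Y (faces_complex d1 X) \<nu> l"
  defines "Z \<equiv> \<lambda>r. induced Y {y \<in> vertices Y. \<nu> y \<in> vertices (faces_complex d1 (link X r))}"
  shows "(\<forall>r\<in>X. r \<noteq> {} \<and> card r \<le> d1 + 1 \<longrightarrow>
            finite (components (Z r)) \<and> card (components (Z r)) = l \<and>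
            (\<forall>C\<in>components (Z r). cx_iso \<nu> (induced (Z r) C) (faces_complex d1 (link X r))))
       \<and> (\<forall>r s. r \<noteq> {} \<and> r \<subseteq> s \<and> s \<in> X \<and> card s \<le> d1 + 1 \<longrightarrow>
            (\<forall>Lr Ls. bij_betw Lr {..<l} (components (Z r)) \<and> bij_betw Ls {..<l} (components (Z s)) \<longrightarrow>
              (\<exists>\<pi>. bij_betw \<pi> {..<l} {..<l} \<and>
                 (\<forall>i<l. \<forall>j<l. induced (Z s) (Ls i) \<subseteq> induced (Z r) (Lr j) \<longleftrightarrow> \<pi> i = j))))"
proof -
  define K where "K = faces_complex d1 X"
  define Q where "Q r = vertices (faces_complex d1 (link X r))" for r
  have scX: "simplicial_complex X" using assms(1) unfolding clique_complex_def by (rule conjunct1)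
  have lc: "l_cover Y K \<nu> l" using assms(5) unfolding K_def .
  have scY: "simplicial_complex Y" and scK: "simplicial_complex K"
    using lc unfolding l_cover_def covering_map_def by auto
  have ZQ: "Z r = induced Y {y \<in> vertices Y. \<nu> y \<in> Q r}" for r by (simp add: Z_def Q_def)
  have FLi: "faces_complex d1 (link X r) = induced K (Q r)" if "r \<in> X" for r
    unfolding K_def Q_def by (rule FL_induced[OF assms(1) that])
  have QK: "Q r \<subseteq> vertices K" if "r \<in> X" for r
  proof -
    have "Q r = vertices (induced K (Q r))" using FLi[OF that] unfolding Q_def by simp
    also have "\<dots> \<subseteq> vertices K" using vertices_induced_sub[of K "Q r"] by auto
    finally show ?thesis .
  qed
  have Qm: "Q s \<subseteq> Q r" if "r \<subseteq> s" for r s unfolding Q_def by (rule FL_mono[OF scX that])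
  have wc1: "\<forall>r\<in>X. card r \<le> d1 + 1 \<longrightarrow> cx_connected (faces_complex d1 (link X r))"
    and wc2: "\<forall>v. {v} \<in> X \<longrightarrow> simply_connected (faces_complex d1 (link X {v}))"
    using assms(4) unfolding well_connected_def by auto
  have WC1: "cx_connected (induced K (Q r))" if "r \<in> X" "card r \<le> d1 + 1" for r
    using wc1 that FLi[OF that(1)] by auto
  have WC2: "simply_connected (induced K (Q {v}))" if "{v} \<in> X" for v
    using wc2 that FLi[OF that] by auto
  have P1: "finite (components (Z r)) \<and> card (components (Z r)) = l \<and>
      (\<forall>C\<in>components (Z r). cx_iso \<nu> (induced (Z r) C) (induced K (Q r)))"
    if r: "r \<in> X" "r \<noteq> {}" "card r \<le> d1 + 1" for r
  proof -
    obtain v where v: "v \<in> r" using r(2) by auto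
    have vX: "{v} \<in> X" using sc_sub[OF scX r(1), of "{v}"] v by auto
    have lcv: "l_cover (induced Y {y \<in> vertices Y. \<nu> y \<in> Q {v}}) (induced K (Q {v})) \<nu> l"
      by (rule cov_restrict[OF lc QK[OF vX]])
    note T = sc_transfer[OF WC2[OF vX] lcv]
    have QQ: "Q r \<subseteq> Q {v}" using Qm v by auto
    note R = restrict_comps[OF scY scK QQ QK[OF vX] T[THEN conjunct1] T[THEN conjunct2, THEN conjunct1]
        T[THEN conjunct2, THEN conjunct2] WC1[OF r(1) r(3)]]
    show ?thesis unfolding ZQ by (rule R[THEN conjunct2, THEN conjunct2])
  qed
  have part1: "\<forall>r\<in>X. r \<noteq> {} \<and> card r \<le> d1 + 1 \<longrightarrow>
            finite (components (Z r)) \<and> card (components (Z r)) = l \<and>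
            (\<forall>C\<in>components (Z r). cx_iso \<nu> (induced (Z r) C) (faces_complex d1 (link X r)))"
  proof (intro ballI impI)
    fix r assume "r \<in> X" "r \<noteq> {} \<and> card r \<le> d1 + 1"
    then show "finite (components (Z r)) \<and> card (components (Z r)) = l \<and>
            (\<forall>C\<in>components (Z r). cx_iso \<nu> (induced (Z r) C) (faces_complex d1 (link X r)))"
      using P1[of r] FLi[of r] by simp
  qed
  have part2: "\<forall>r s. r \<noteq> {} \<and> r \<subseteq> s \<and> s \<in> X \<and> card s \<le> d1 + 1 \<longrightarrow>
            (\<forall>Lr Ls. bij_betw Lr {..<l} (components (Z r)) \<and> bij_betw Ls {..<l} (components (Z s)) \<longrightarrow>
              (\<exists>\<pi>. bij_betw \<pi> {..<l} {..<l} \<and>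
                 (\<forall>i<l. \<forall>j<l. induced (Z s) (Ls i) \<subseteq> induced (Z r) (Lr j) \<longleftrightarrow> \<pi> i = j)))"
  proof (intro allI impI)
    fix r s Lr Ls
    assume a: "r \<noteq> {} \<and> r \<subseteq> s \<and> s \<in> X \<and> card s \<le> d1 + 1"
      and b: "bij_betw Lr {..<l} (components (Z r)) \<and> bij_betw Ls {..<l} (components (Z s))"
    have rs: "r \<subseteq> s" and sX: "s \<in> X" and cs: "card s \<le> d1 + 1" and rne: "r \<noteq> {}" using a by auto
    have rX: "r \<in> X" by (rule sc_sub[OF scX sX rs])
    have "card r \<le> card s" by (rule card_mono[OF sc_fin[OF scX sX] rs])
    then have cr: "card r \<le> d1 + 1" using cs by simp
    note P = P1[OF rX rne cr, unfolded ZQ]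
    note R = restrict_comps[OF scY scK Qm[OF rs] QK[OF rX] P[THEN conjunct1] P[THEN conjunct2, THEN conjunct1]
        P[THEN conjunct2, THEN conjunct2] WC1[OF sX cs]]
    have scZs: "simplicial_complex (Z s)" unfolding ZQ by (rule simplicial_induced[OF scY])
    have sub: "Z s \<subseteq> Z r" unfolding ZQ induced_def using Qm[OF rs] by auto
    have comps: "components (Z s) = (\<lambda>C. C \<inter> {y \<in> vertices Y. \<nu> y \<in> Q s}) ` components (Z r)"
      unfolding ZQ using R by simp
    have inj: "inj_on (\<lambda>C. C \<inter> {y \<in> vertices Y. \<nu> y \<in> Q s}) (components (Z r))"
      unfolding ZQ using R by simp
    show "\<exists>\<pi>. bij_betw \<pi> {..<l} {..<l} \<and>
                 (\<forall>i<l. \<forall>j<l. induced (Z s) (Ls i) \<subseteq> induced (Z r) (Lr j) \<longleftrightarrow> \<pi> i = j)"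
      by (rule perm_part[OF scZs sub comps inj b[THEN conjunct1] b[THEN conjunct2]])
  qed
  show ?thesis using part1 part2 by (rule conjI)
qed

end
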